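(* Let $(X,d)$ be a separable metric space and $p\ge1$. If $\{\mu_n\}_{n\in\mathbb{N}}$ and $\mu$ in $\mathcal{P}_{p-1}(X)$ satisfy $\mu_n\to\mu$ in $\tau_{\mathrm{w}}^{p-1}$ and $\{\varepsilon_n\}_{n\in\mathbb{N}}$ is any bounded sequence of non-negative real numbers, then there exists a $d$-bounded set $B\subseteq X$ such that $M_p(\mu_n;\varepsilon_n)\subseteq B$ for all $n\in\mathbb{N}$.
   Context: For $r\ge0$, $\mathcal{P}_r(X)$ is the set of Borel probability measures $\mu$ on $(X,d)$ with $\int_X d^r(x,y)\,d\mu(y)<\infty$ for some (equivalently all) $x\in X$; $\mu_n\to\mu$ in $\tau_{\mathrm{w}}^r$ means $\int f\,d\mu_n\to\int f\,d\mu$ for every bounded continuous $f:(X,d)\to\mathbb{R}$ and $\int d^r(x,y)\,d\mu_n(y)\to\int d^r(x,y)\,d\mu(y)$ for all $x\in X$. For $\mu\in\mathcal{P}_{p-1}(X)$, $W_p(\mu,x,x'):=\int_X(d^p(x,y)-d^p(x',y))\,d\mu(y)$ and, for $\varepsilon\ge0$, $M_p(\mu;\varepsilon):=\{x\in X: W_p(\mu,x,x')\le\varepsilon\text{ for all } x'\in X\}$. *)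

theory Defs
  imports "HOL-Analysis.Analysis" "HOL-Probability.Probability"
begin

text \<open>d^r(x,y), with the convention d^0 = 1 (note 0 powr 0 = 0 in Isabelle).\<close>
definition dpow :: "real \<Rightarrow> 'a::metric_space \<Rightarrow> 'a \<Rightarrow> real" where
  "dpow r x y = (if r = 0 then 1 else dist x y powr r)"

definition borel_prob :: "'a::metric_space measure \<Rightarrow> bool" where
  "borel_prob M \<longleftrightarrow> prob_space M \<and> sets M = sets (borel :: 'a measure)"

text \<open>P_r(X): finite r-th moment (for some, equivalently all, x).\<close>
definition Pr :: "real \<Rightarrow> 'a::metric_space measure set" where
  "Pr r = {M. borel_prob M \<and> (\<exists>x. integrable M (\<lambda>y. dpow r x y))}"

definition conv_wr :: "real \<Rightarrow> (nat \<Rightarrow> 'a::metric_space measure) \<Rightarrow> 'a measure \<Rightarrow> bool" where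
  "conv_wr r \<mu>s \<mu> \<longleftrightarrow>
     (\<forall>f :: 'a \<Rightarrow> real. continuous_on UNIV f \<and> bounded (range f) \<longrightarrow>
        (\<lambda>n. integral\<^sup>L (\<mu>s n) f) \<longlonglongrightarrow> integral\<^sup>L \<mu> f) \<and>
     (\<forall>x. (\<lambda>n. integral\<^sup>L (\<mu>s n) (\<lambda>y. dpow r x y)) \<longlonglongrightarrow> integral\<^sup>L \<mu> (\<lambda>y. dpow r x y))"

definition Wp :: "real \<Rightarrow> 'a::metric_space measure \<Rightarrow> 'a \<Rightarrow> 'a \<Rightarrow> real" where
  "Wp p \<mu> x x' = integral\<^sup>L \<mu> (\<lambda>y. dist x y powr p - dist x' y powr p)"

definition Mp :: "real \<Rightarrow> 'a::metric_space measure \<Rightarrow> real \<Rightarrow> 'a set" where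
  "Mp p \<mu> \<epsilon> = {x. \<forall>x'. Wp p \<mu> x x' \<le> \<epsilon>}"

end

theory Submission
  imports Defs "HOL-Real_Asymp.Real_Asymp"
begin


lemma powr_tangent:
  fixes a b p :: real
  assumes p: "p \<ge> 1" and a: "a \<ge> 0" and b: "b \<ge> 0"
  shows "a powr p - b powr p \<ge> p * b powr (p - 1) * (a - b)"
proof (cases "b = 0")
  case True then show ?thesis using a by simp
next
  case bpos: False
  then have b': "b > 0" using b by simp
  show ?thesis
  proof (cases "a = 0")
    case True
    have "b powr (p - 1) * b = b powr p"
      using b' by (simp add: powr_diff)
    then have "p * b powr (p - 1) * (a - b) = - p * b powr p" using True by (simp add: algebra_simps)
    moreover have "b powr p \<le> p * b powr p" using p b' by (simp add: mult_le_cancel_right1)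
    ultimately show ?thesis using True p by (simp add: mult.assoc)
  next
    case False
    then have a': "a > 0" using a by simp
    have "(\<lambda>x. x powr p) a - (\<lambda>x. x powr p) b \<ge> (p * b powr (p - 1)) * (a - b)"
      apply (rule convex_on_imp_above_tangent[where A="{0<..}"])
      using powr_convex[OF p] a' b' by (auto simp: interior_open intro!: derivative_eq_intros)
    then show ?thesis by simp
  qed
qed

lemma powr_diff_bound:
  fixes a b p :: real
  assumes p: "p \<ge> 1" and a: "a \<ge> 0" and b: "b \<ge> 0"
  shows "\<bar>a powr p - b powr p\<bar> \<le> p * (max a b) powr (p - 1) * \<bar>a - b\<bar>"
proof -
  have 1: "a powr p - b powr p \<ge> p * b powr (p - 1) * (a - b)" using powr_tangent[OF p a b] .
  have 2: "b powr p - a powr p \<ge> p * a powr (p - 1) * (b - a)" using powr_tangent[OF p b a] .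
  show ?thesis
  proof (cases "a \<le> b")
    case True
    have "a powr p \<le> b powr p" using True a p by (simp add: powr_mono2)
    moreover have "b powr (p-1) = max a b powr (p-1)" using True by (simp add: max_def)
    ultimately show ?thesis using 1 True by (simp add: abs_if algebra_simps)
  next
    case False
    have "b powr p \<le> a powr p" using False b p by (simp add: powr_mono2)
    moreover have "a powr (p-1) = max a b powr (p-1)" using False by (simp add: max_def)
    ultimately show ?thesis using 2 False by (simp add: abs_if algebra_simps)
  qed
qed

lemma powr_sum_le:
  fixes s t q :: real
  assumes "s \<ge> 0" "t \<ge> 0" "q \<ge> 0"
  shows "(s + t) powr q \<le> 2 powr q * (s powr q + t powr q)"
proof -
  have "(s + t) powr q \<le> (2 * max s t) powr q"
    using assms by (intro powr_mono2) auto
  also have "\<dots> = 2 powr q * max s t powr q" using assms by (simp add: powr_mult)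
  also have "max s t powr q \<le> s powr q + t powr q" by (simp add: max_def)
  then have "2 powr q * max s t powr q \<le> 2 powr q * (s powr q + t powr q)" by simp
  finally show ?thesis .
qed



lemma bp_meas:
  fixes f :: "'a::metric_space \<Rightarrow> real"
  assumes "borel_prob M" "continuous_on UNIV f"
  shows "f \<in> borel_measurable M"
proof -
  have "sets M = sets (borel::'a measure)" using assms(1) by (simp add: borel_prob_def)
  then have "borel_measurable M = (borel_measurable borel :: ('a \<Rightarrow> real) set)"
    by (intro measurable_cong_sets) auto
  then show ?thesis using borel_measurable_continuous_onI[OF assms(2)] by simp
qed

lemma bp_sets:
  assumes "borel_prob (M::'a::metric_space measure)" "closed S"
  shows "S \<in> sets M"
  using assms by (simp add: borel_prob_def borel_closed)

lemma bp_space: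
  assumes "borel_prob (M::'a::metric_space measure)"
  shows "space M = UNIV"
  using assms sets_eq_imp_space_eq[of M borel] by (simp add: borel_prob_def)

lemma ball_lim:
  fixes x0 :: "'a::metric_space"
  assumes "borel_prob M"
  shows "(\<lambda>k::nat. measure M (cball x0 (real k))) \<longlonglongrightarrow> 1"
proof -
  interpret prob_space M using assms by (simp add: borel_prob_def)
  have "(\<lambda>k::nat. measure M (cball x0 (real k))) \<longlonglongrightarrow> measure M (\<Union>k. cball x0 (real k))"
    by (rule finite_Lim_measure_incseq)
       (auto simp: bp_sets[OF assms] incseq_def subset_cball)
  moreover have "(\<Union>k. cball x0 (real k)) = space M"
    using bp_space[OF assms] by (auto simp: mem_cball intro: real_arch_simple)
  ultimately show ?thesis by (simp add: prob_space)
qed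

lemma ball_big:
  fixes x0 :: "'a::metric_space"
  assumes "borel_prob M" "c < 1"
  shows "\<exists>r\<ge>0. measure M (cball x0 r) > c"
proof -
  have "eventually (\<lambda>k. measure M (cball x0 (real k)) > c) sequentially"
    using order_tendstoD(1)[OF ball_lim[OF assms(1)] assms(2)] .
  then obtain k where "measure M (cball x0 (real k)) > c" by (auto simp: eventually_sequentially)
  then show ?thesis by (intro exI[of _ "real k"]) auto
qed

lemma uniform_mass:
  fixes x0 :: "'a::metric_space"
  assumes bpn: "\<And>n. borel_prob (\<mu>s n)" and bp: "borel_prob \<mu>"
   and weak: "\<forall>f::'a\<Rightarrow>real. continuous_on UNIV f \<and> bounded (range f) \<longrightarrow>
        (\<lambda>n. integral\<^sup>L (\<mu>s n) f) \<longlonglongrightarrow> integral\<^sup>L \<mu> f"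
  shows "\<exists>r\<ge>0. \<forall>n. measure (\<mu>s n) (cball x0 r) \<ge> 2/3"
proof -
  obtain k where k: "k \<ge> 0" "measure \<mu> (cball x0 k) > 5/6" using ball_big[OF bp, of "5/6" x0] by auto
  define \<phi> where "\<phi> = (\<lambda>y. max 0 (min 1 (k + 1 - dist x0 y)))"
  have cont: "continuous_on UNIV \<phi>" unfolding \<phi>_def by (intro continuous_intros)
  have bnd: "bounded (range \<phi>)" unfolding \<phi>_def bounded_iff
    by (intro exI[of _ 1]) auto
  have lo: "\<And>y. indicator (cball x0 k) y \<le> \<phi> y" unfolding \<phi>_def by (auto simp: indicator_def mem_cball)
  have hi: "\<And>y. \<phi> y \<le> indicator (cball x0 (k+1)) y" unfolding \<phi>_def by (auto simp: indicator_def mem_cball)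
  have intphi: "integrable M \<phi>" if "borel_prob M" for M
  proof -
    interpret prob_space M using that by (simp add: borel_prob_def)
    show ?thesis
      by (rule integrable_const_bound[where B=1]) (auto simp: \<phi>_def bp_meas[OF that cont[unfolded \<phi>_def]])
  qed
  have intind: "integrable M (indicator (cball x0 r) :: 'a \<Rightarrow> real)" if "borel_prob M" for M r
  proof -
    interpret prob_space M using that by (simp add: borel_prob_def)
    show ?thesis using bp_sets[OF that, of "cball x0 r"] by (intro integrable_real_indicator) (auto simp: less_top[symmetric])
  qed
  have "measure \<mu> (cball x0 k) \<le> integral\<^sup>L \<mu> \<phi>"
  proof -
    have "integral\<^sup>L \<mu> (indicator (cball x0 k)) \<le> integral\<^sup>L \<mu> \<phi>"
      by (rule integral_mono[OF intind[OF bp] intphi[OF bp] lo])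
    then show ?thesis using bp_space[OF bp] by simp
  qed
  with k have "integral\<^sup>L \<mu> \<phi> > 2/3" by simp
  then have "eventually (\<lambda>n. integral\<^sup>L (\<mu>s n) \<phi> > 2/3) sequentially"
    using weak cont bnd by (intro order_tendstoD(1)) auto
  then obtain N where N: "\<And>n. n \<ge> N \<Longrightarrow> integral\<^sup>L (\<mu>s n) \<phi> > 2/3"
    by (auto simp: eventually_sequentially)
  have bigN: "measure (\<mu>s n) (cball x0 (k+1)) \<ge> 2/3" if "n \<ge> N" for n
  proof -
    have "integral\<^sup>L (\<mu>s n) \<phi> \<le> integral\<^sup>L (\<mu>s n) (indicator (cball x0 (k+1)))"
      by (rule integral_mono[OF intphi[OF bpn] intind[OF bpn] hi])
    then show ?thesis using N[OF that] bp_space[OF bpn] by simp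
  qed
  have "\<exists>r. r \<ge> 0 \<and> measure (\<mu>s n) (cball x0 r) > 2/3" for n
    using ball_big[OF bpn[of n], of "2/3" x0] by auto
  then obtain rr where rr: "\<And>n. rr n \<ge> 0" "\<And>n. measure (\<mu>s n) (cball x0 (rr n)) > 2/3"
    by metis
  define r where "r = max (k+1) (Max (rr ` {..<N}))"
  have "r \<ge> 0" using k by (simp add: r_def)
  moreover have "measure (\<mu>s n) (cball x0 r) \<ge> 2/3" for n
  proof -
    interpret prob_space "\<mu>s n" using bpn by (simp add: borel_prob_def)
    show ?thesis
    proof (cases "n \<ge> N")
      case True
      have "measure (\<mu>s n) (cball x0 (k+1)) \<le> measure (\<mu>s n) (cball x0 r)"
        by (rule finite_measure_mono) (auto simp: r_def subset_cball bp_sets[OF bpn])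
      then show ?thesis using bigN[OF True] by simp
    next
      case False
      then have "rr n \<le> Max (rr ` {..<N})" by (intro Max_ge) auto
      then have "rr n \<le> r" by (simp add: r_def)
      then have "measure (\<mu>s n) (cball x0 (rr n)) \<le> measure (\<mu>s n) (cball x0 r)"
        by (intro finite_measure_mono) (auto simp: subset_cball bp_sets[OF bpn])
      then show ?thesis using rr(2)[of n] by simp
    qed
  qed
  ultimately show ?thesis by blast
qed



lemma dist_diff_le: "\<bar>dist x y - dist x0 y\<bar> \<le> dist x (x0::'a::metric_space)"
  by (metis abs_dist_diff_le dist_commute)

lemma key_eq1:
  fixes x x0 :: "'a::metric_space"
  assumes bp: "borel_prob N" and m: "measure N (cball x0 r) \<ge> 2/3" and r: "r \<ge> 0"
    and R: "dist x x0 \<ge> r" and W: "Wp 1 N x x0 \<le> K"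
  shows "dist x x0 / 3 - 4 * r / 3 \<le> K"
proof -
  interpret prob_space N using bp by (simp add: borel_prob_def)
  define R where "R = dist x x0"
  define f where "f = (\<lambda>y. dist x y powr 1 - dist x0 y powr 1)"
  have f_eq: "f = (\<lambda>y. dist x y - dist x0 y)" unfolding f_def by simp
  have fint: "integrable N f"
    unfolding f_eq
    by (rule integrable_const_bound[where B=R])
       (auto simp: R_def dist_diff_le intro!: bp_meas[OF bp] continuous_intros)
  define l where "l = (\<lambda>y. (2*R - 2*r) * indicator (cball x0 r) y - R)"
  have Sset: "cball x0 r \<in> sets N" using bp_sets[OF bp] by simp
  have lint: "integrable N l" unfolding l_def using Sset
    by (intro Bochner_Integration.integrable_diff integrable_mult_right integrable_real_indicator)
       (auto simp: less_top[symmetric])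
  have le: "l y \<le> f y" for y
  proof (cases "y \<in> cball x0 r")
    case True
    then have "dist x0 y \<le> r" by (simp add: mem_cball)
    moreover have "dist x y \<ge> R - dist x0 y" using dist_triangle[of x x0 y] by (simp add: R_def dist_commute)
    ultimately show ?thesis by (simp add: l_def f_eq)
  next
    case False
    then show ?thesis using dist_diff_le[of x y x0] by (simp add: l_def f_eq R_def)
  qed
  have "integral\<^sup>L N l \<le> integral\<^sup>L N f" by (rule integral_mono[OF lint fint le])
  also have "integral\<^sup>L N f = Wp 1 N x x0" by (simp add: Wp_def f_def)
  finally have 1: "integral\<^sup>L N l \<le> K" using W by simp
  have "integral\<^sup>L N l = (2*R - 2*r) * measure N (cball x0 r) - R"
    unfolding l_def using Sset
    by (subst Bochner_Integration.integral_diff) (auto simp: less_top[symmetric] prob_space)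
  moreover have "(2*R - 2*r) * (2/3) \<le> (2*R - 2*r) * measure N (cball x0 r)"
    using m R by (intro mult_left_mono) (auto simp: R_def)
  ultimately show ?thesis using 1 by (simp add: R_def)
qed




lemma cont_dpow:
  fixes x0 :: "'a::metric_space"
  assumes "q > 0"
  shows "continuous_on UNIV (\<lambda>y. dist x0 y powr q)"
  using assms by (intro continuous_on_powr' continuous_intros) auto

lemma shift_int:
  fixes x0 x1 :: "'a::metric_space"
  assumes bp: "borel_prob N" and q: "q > 0"
    and I: "integrable N (\<lambda>y. dist x1 y powr q)"
  shows "integrable N (\<lambda>y. dist x0 y powr q)"
proof -
  interpret prob_space N using bp by (simp add: borel_prob_def)
  have g: "integrable N (\<lambda>y. 2 powr q * (dist x1 y powr q + dist x0 x1 powr q))"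
    using I by (intro integrable_mult_right Bochner_Integration.integrable_add) auto
  show ?thesis
  proof (rule Bochner_Integration.integrable_bound[OF g])
    show "(\<lambda>y. dist x0 y powr q) \<in> borel_measurable N"
      using q by (intro bp_meas[OF bp] cont_dpow)
    show "AE y in N. norm (dist x0 y powr q) \<le> norm (2 powr q * (dist x1 y powr q + dist x0 x1 powr q))"
    proof (intro AE_I2)
      fix y
      have "dist x0 y powr q \<le> (dist x1 y + dist x0 x1) powr q"
        using q dist_triangle[of x0 y x1] by (intro powr_mono2) (auto simp: dist_commute)
      also have "\<dots> \<le> 2 powr q * (dist x1 y powr q + dist x0 x1 powr q)"
        using q by (intro powr_sum_le) auto
      finally show "norm (dist x0 y powr q) \<le> norm (2 powr q * (dist x1 y powr q + dist x0 x1 powr q))"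
        by simp
    qed
  qed
qed

lemma key_gt1:
  fixes x x0 :: "'a::metric_space"
  assumes bp: "borel_prob N" and p: "p > 1"
    and I: "integrable N (\<lambda>y. dist x0 y powr (p - 1))"
    and IM: "integral\<^sup>L N (\<lambda>y. dist x0 y powr (p - 1)) \<le> M"
    and m: "measure N (cball x0 r) \<ge> 2/3" and r: "r \<ge> 0"
    and R: "dist x x0 \<ge> 2 * r" and W: "Wp p N x x0 \<le> K"
  shows "(2/3) * ((dist x x0 - r) powr p - r powr p) - p * dist x x0 * M \<le> K"
proof -
  interpret prob_space N using bp by (simp add: borel_prob_def)
  define R where "R = dist x x0"
  define q where "q = p - 1"
  have q: "q > 0" using p by (simp add: q_def)
  define f where "f = (\<lambda>y. dist x y powr p - dist x0 y powr p)"
  have g: "integrable N (\<lambda>y. p * R * 2 powr q * (dist x0 y powr q + R powr q))"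
    using I by (intro integrable_mult_right Bochner_Integration.integrable_add) (auto simp: q_def)
  have fint: "integrable N f"
  proof (rule Bochner_Integration.integrable_bound[OF g])
    show "f \<in> borel_measurable N"
      unfolding f_def using p by (intro bp_meas[OF bp] continuous_intros cont_dpow) auto
    show "AE y in N. norm (f y) \<le> norm (p * R * 2 powr q * (dist x0 y powr q + R powr q))"
    proof (intro AE_I2)
      fix y
      have dd: "\<bar>dist x y - dist x0 y\<bar> \<le> R" using dist_diff_le[of x y x0] by (simp add: R_def)
      have "\<bar>f y\<bar> \<le> p * (max (dist x y) (dist x0 y)) powr q * \<bar>dist x y - dist x0 y\<bar>"
        unfolding f_def q_def using p by (intro powr_diff_bound) auto
      also have "\<dots> \<le> p * (dist x0 y + R) powr q * R"
        using p q dd by (intro mult_mono powr_mono2) (auto simp: le_max_iff_disj)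
      also have "\<dots> \<le> p * (2 powr q * (dist x0 y powr q + R powr q)) * R"
        using p q by (intro mult_mono powr_sum_le) (auto simp: R_def)
      finally show "norm (f y) \<le> norm (p * R * 2 powr q * (dist x0 y powr q + R powr q))"
        using p by (simp add: algebra_simps)
    qed
  qed
  define h where "h = (R - r) powr p - r powr p"
  have "r powr p \<le> (R - r) powr p" using R r p by (intro powr_mono2) (auto simp: R_def)
  then have h: "h \<ge> 0" unfolding h_def by simp
  define l where "l = (\<lambda>y. h * indicator (cball x0 r) y - p * R * dist x0 y powr q)"
  have Sset: "cball x0 r \<in> sets N" using bp_sets[OF bp] by simp
  have lint: "integrable N l" unfolding l_def using Sset I
    by (intro Bochner_Integration.integrable_diff integrable_mult_right integrable_real_indicator)
       (auto simp: less_top[symmetric] q_def)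
  have le: "l y \<le> f y" for y
  proof (cases "y \<in> cball x0 r")
    case True
    then have b: "dist x0 y \<le> r" by (simp add: mem_cball)
    moreover have a: "dist x y \<ge> R - dist x0 y" using dist_triangle[of x x0 y] by (simp add: R_def dist_commute)
    have "(R - r) powr p \<le> dist x y powr p" using a b R r p by (intro powr_mono2) (auto simp: R_def)
    moreover have "dist x0 y powr p \<le> r powr p" using b p by (intro powr_mono2) auto
    moreover have "0 \<le> p * R * dist x0 y powr q" using p by (simp add: R_def)
    ultimately show ?thesis using True by (simp add: l_def f_def h_def)
  next
    case False
    have t: "dist x y powr p - dist x0 y powr p \<ge> p * dist x0 y powr q * (dist x y - dist x0 y)"
      unfolding q_def using p by (intro powr_tangent) auto
    have "dist x y - dist x0 y \<ge> - R" using dist_diff_le[of x y x0] by (simp add: R_def)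
    then have "p * dist x0 y powr q * (dist x y - dist x0 y) \<ge> p * dist x0 y powr q * (- R)"
      using p by (intro mult_left_mono) auto
    then show ?thesis using False t by (simp add: l_def f_def mult_ac)
  qed
  have "integral\<^sup>L N l \<le> integral\<^sup>L N f" by (rule integral_mono[OF lint fint le])
  also have "integral\<^sup>L N f = Wp p N x x0" by (simp add: Wp_def f_def)
  finally have 1: "integral\<^sup>L N l \<le> K" using W by simp
  have "integral\<^sup>L N l = h * measure N (cball x0 r) - p * R * integral\<^sup>L N (\<lambda>y. dist x0 y powr q)"
    unfolding l_def using Sset I
    by (subst Bochner_Integration.integral_diff) (auto simp: less_top[symmetric] q_def)
  moreover have "h * (2/3) \<le> h * measure N (cball x0 r)"
    using m h by (intro mult_left_mono) auto
  moreover have "p * R * integral\<^sup>L N (\<lambda>y. dist x0 y powr q) \<le> p * R * M"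
    using IM p by (intro mult_left_mono) (auto simp: q_def R_def)
  ultimately have "h * (2/3) - p * R * M \<le> K" using 1 by linarith
  then show ?thesis by (simp add: R_def h_def algebra_simps)
qed




lemma growth:
  assumes "p > (1::real)"
  shows "filterlim (\<lambda>R::real. (2/3)*((R-r) powr p - r powr p) - p*R*M) at_top at_top"
  using assms by real_asymp

theorem lemma3p6:
  fixes \<mu>s :: "nat \<Rightarrow> 'a::metric_space measure" and \<mu> :: "'a measure"
    and p :: real and \<epsilon> :: "nat \<Rightarrow> real"
  assumes "separable_space (euclidean :: 'a topology)"
    and "p \<ge> 1"
    and "\<And>n. \<mu>s n \<in> Pr (p - 1)" and "\<mu> \<in> Pr (p - 1)"
    and "conv_wr (p - 1) \<mu>s \<mu>"
    and "\<And>n. \<epsilon> n \<ge> 0" and "bounded (range \<epsilon>)"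
  shows "\<exists>B. bounded B \<and> (\<forall>n. Mp p (\<mu>s n) (\<epsilon> n) \<subseteq> B)"
proof -
  define x0 :: 'a where "x0 = undefined"
  have bpn: "\<And>n. borel_prob (\<mu>s n)" using assms(3) by (simp add: Pr_def)
  have bp: "borel_prob \<mu>" using assms(4) by (simp add: Pr_def)
  have weak: "\<forall>f::'a\<Rightarrow>real. continuous_on UNIV f \<and> bounded (range f) \<longrightarrow>
        (\<lambda>n. integral\<^sup>L (\<mu>s n) f) \<longlonglongrightarrow> integral\<^sup>L \<mu> f"
    using assms(5) unfolding conv_wr_def by blast
  obtain r where r: "r \<ge> 0" "\<And>n. measure (\<mu>s n) (cball x0 r) \<ge> 2/3"
    using uniform_mass[OF bpn bp weak, of x0] by blast
  obtain K where K0: "\<forall>z\<in>range \<epsilon>. norm z \<le> K"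
    using assms(7) unfolding bounded_iff by blast
  have K: "\<epsilon> n \<le> K" for n using K0 abs_le_D1 by auto
  have WK: "Wp p (\<mu>s n) x x0 \<le> K" if "x \<in> Mp p (\<mu>s n) (\<epsilon> n)" for x n
  proof -
    have "Wp p (\<mu>s n) x x0 \<le> \<epsilon> n" using that unfolding Mp_def by blast
    then show ?thesis using K[of n] by linarith
  qed
  show ?thesis
  proof (cases "p = 1")
    case True
    define R0 where "R0 = max r (3*K + 4*r)"
    show ?thesis
    proof (intro exI[of _ "cball x0 R0"] conjI allI subsetI)
      fix n x assume x: "x \<in> Mp p (\<mu>s n) (\<epsilon> n)"
      show "x \<in> cball x0 R0"
      proof (cases "dist x x0 \<le> r")
        case True then show ?thesis by (simp add: R0_def mem_cball dist_commute)
      next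
        case False
        have "dist x x0 / 3 - 4 * r / 3 \<le> K"
          using key_eq1[OF bpn r(2) r(1)] False WK[OF x] \<open>p = 1\<close> by simp
        then show ?thesis by (simp add: R0_def mem_cball dist_commute)
      qed
    qed simp
  next
    case False
    then have p: "p > 1" using assms(2) by simp
    define q where "q = p - 1"
    have q: "q > 0" using p by (simp add: q_def)
    have dq: "dpow q z = (\<lambda>y. dist z y powr q)" for z using q by (simp add: dpow_def fun_eq_iff)
    have In: "integrable (\<mu>s n) (\<lambda>y. dist x0 y powr q)" for n
    proof -
      obtain x1 where "integrable (\<mu>s n) (dpow q x1)" using assms(3)[of n] by (auto simp: Pr_def q_def)
      then have "integrable (\<mu>s n) (\<lambda>y. dist x1 y powr q)" unfolding dq .
      then show ?thesis by (rule shift_int[OF bpn q])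
    qed
    have "(\<lambda>n. integral\<^sup>L (\<mu>s n) (dpow q x0)) \<longlonglongrightarrow> integral\<^sup>L \<mu> (dpow q x0)"
      using assms(5) unfolding conv_wr_def q_def by blast
    then have "(\<lambda>n. integral\<^sup>L (\<mu>s n) (\<lambda>y. dist x0 y powr q)) \<longlonglongrightarrow> integral\<^sup>L \<mu> (\<lambda>y. dist x0 y powr q)"
      unfolding dq .
    then have "Bseq (\<lambda>n. integral\<^sup>L (\<mu>s n) (\<lambda>y. dist x0 y powr q))" by (intro convergent_imp_Bseq convergentI)
    then obtain M where M0: "\<And>n. norm (integral\<^sup>L (\<mu>s n) (\<lambda>y. dist x0 y powr q)) \<le> M"
      unfolding Bseq_def by blast
    have M: "integral\<^sup>L (\<mu>s n) (\<lambda>y. dist x0 y powr q) \<le> M" for n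
      using M0[of n] by simp
    have "eventually (\<lambda>R. (2/3)*((R-r) powr p - r powr p) - p*R*M > K) at_top"
      using growth[OF p, of r M] by (simp add: filterlim_at_top_dense)
    then obtain R0 where R0: "\<And>R. R \<ge> R0 \<Longrightarrow> (2/3)*((R-r) powr p - r powr p) - p*R*M > K"
      by (auto simp: eventually_at_top_linorder)
    define R1 where "R1 = max (2*r) R0"
    show ?thesis
    proof (intro exI[of _ "cball x0 R1"] conjI allI subsetI)
      fix n x assume x: "x \<in> Mp p (\<mu>s n) (\<epsilon> n)"
      show "x \<in> cball x0 R1"
      proof (rule ccontr)
        assume "x \<notin> cball x0 R1"
        then have d: "dist x x0 > R1" by (simp add: mem_cball dist_commute)
        have "(2/3) * ((dist x x0 - r) powr p - r powr p) - p * dist x x0 * M \<le> K"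
          using key_gt1[OF bpn p In[unfolded q_def] M[unfolded q_def] r(2) r(1) _ WK[OF x]] d
          by (simp add: R1_def)
        moreover have "(2/3) * ((dist x x0 - r) powr p - r powr p) - p * dist x x0 * M > K"
          using R0 d by (simp add: R1_def)
        ultimately show False by simp
      qed
    qed simp
  qed
qed

end
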